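(* Let $N\geq 2$, and let $f:\{0,1\}^N\to\{0,1\}$ be a total function. Then \[\mathrm{H}(\mathrm{C}_f)\leq 10\mathrm{Bal}(f)\log N.\]
   Context: $\mathrm{C}_f(x)$ is the certificate complexity of $f$ at $x$. For $g:\{0,1\}^N\to[0,\infty)$, the H-index $\mathrm{H}(g)$ is the maximum $h$ such that at least $2^h$ inputs satisfy $g(x)\geq h$ (equivalently, the minimum $h$ such that at most $2^h$ inputs satisfy $g(x)>h$). $\mathrm{Bal}(f)$ is $0$ if $f$ is constant, and otherwise $\min\{1+\log|f^{-1}(0)|,\,1+\log|f^{-1}(1)|\}$ (log base 2). *)

theory Defs
  imports Complex_Main
begin

text \<open>The Boolean cube {0,1}^N, represented as bit-vectors nat => bool that are
  False outside the coordinates 0..N-1.\<close>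
definition cube :: "nat \<Rightarrow> (nat \<Rightarrow> bool) set" where
  "cube N = {x. \<forall>i\<ge>N. x i = False}"

definition cert :: "nat \<Rightarrow> ((nat \<Rightarrow> bool) \<Rightarrow> bool) \<Rightarrow> (nat \<Rightarrow> bool) \<Rightarrow> nat" where
  "cert N f x = (LEAST k. \<exists>S. S \<subseteq> {..<N} \<and> card S = k \<and>
      (\<forall>y\<in>cube N. (\<forall>i\<in>S. y i = x i) \<longrightarrow> f y = f x))"

text \<open>H-index of g : {0,1}^N -> [0,inf): the maximum h with at least 2^h inputs
  satisfying g x >= h (the maximum exists; we write it as a supremum).\<close>
definition Hindex :: "nat \<Rightarrow> ((nat \<Rightarrow> bool) \<Rightarrow> real) \<Rightarrow> real" where
  "Hindex N g = Sup {h::real. 2 powr h \<le> real (card {x\<in>cube N. g x \<ge> h})}"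

definition Bal :: "nat \<Rightarrow> ((nat \<Rightarrow> bool) \<Rightarrow> bool) \<Rightarrow> real" where
  "Bal N f = (if (\<forall>x\<in>cube N. \<forall>y\<in>cube N. f x = f y) then 0
     else min (1 + log 2 (real (card {x\<in>cube N. f x = False})))
              (1 + log 2 (real (card {x\<in>cube N. f x = True}))))"

end

theory Submission
  imports Defs
begin

lemma cube_sub: "cube N \<subseteq> (\<lambda>S i. i \<in> S) ` Pow {..<N}"
proof
  fix x assume "x \<in> cube N"
  hence "x = (\<lambda>i. i \<in> {i. i < N \<and> x i})" by (auto simp: cube_def) (metis not_le)
  thus "x \<in> (\<lambda>S i. i \<in> S) ` Pow {..<N}" by blast
qed

lemma finite_cube: "finite (cube N)"
  using cube_sub finite_subset by blast

lemma card_cube_le: "card (cube N) \<le> 2 ^ N"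
proof -
  have "card (cube N) \<le> card ((\<lambda>S i. i \<in> S) ` Pow {..<N})"
    by (rule card_mono[OF _ cube_sub]) simp
  also have "\<dots> \<le> card (Pow {..<N::nat})" by (rule card_image_le) simp
  also have "\<dots> = 2 ^ N" by (simp add: card_Pow)
  finally show ?thesis .
qed

definition bad :: "nat \<Rightarrow> nat \<Rightarrow> (nat\<Rightarrow>bool) set \<Rightarrow> (nat\<Rightarrow>bool) set" where
  "bad N k Y = {x \<in> cube N. \<forall>S. S \<subseteq> {..<N} \<and> card S \<le> k \<longrightarrow> (\<exists>y\<in>Y. \<forall>i\<in>S. y i = x i)}"

definition maj :: "nat \<Rightarrow> (nat\<Rightarrow>bool) set \<Rightarrow> nat \<Rightarrow> bool" where
  "maj N Y = (\<lambda>i. i < N \<and> 2 * card {y\<in>Y. y i} > card Y)"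

lemma card_split: "finite Y \<Longrightarrow> card {y\<in>Y. P y} + card {y\<in>Y. \<not> P y} = card Y"
proof -
  assume f: "finite Y"
  have "Y = {y\<in>Y. P y} \<union> {y\<in>Y. \<not> P y}" by auto
  hence "card Y = card ({y\<in>Y. P y} \<union> {y\<in>Y. \<not> P y})" by simp
  also have "\<dots> = card {y\<in>Y. P y} + card {y\<in>Y. \<not> P y}"
    by (rule card_Un_disjoint) (use f in auto)
  finally show ?thesis by simp
qed

lemma maj_half: "finite Y \<Longrightarrow> i < N \<Longrightarrow> 2 * card {y\<in>Y. y i \<noteq> maj N Y i} \<le> card Y"
proof -
  assume f: "finite Y" and iN: "i < N"
  note cs = card_split[OF f, of "\<lambda>y. y i"]
  show ?thesis
  proof (cases "maj N Y i")
    case True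
    hence "2 * card {y\<in>Y. y i} > card Y" by (simp add: maj_def)
    moreover have "{y\<in>Y. y i \<noteq> maj N Y i} = {y\<in>Y. \<not> y i}" using True by auto
    ultimately show ?thesis using cs by simp
  next
    case False
    have "{y\<in>Y. y i \<noteq> maj N Y i} = {y\<in>Y. y i}" using False by auto
    moreover have "2 * card {y\<in>Y. y i} \<le> card Y" using False iN by (simp add: maj_def)
    ultimately show ?thesis by simp
  qed
qed

lemma bad_sub_cube: "bad N k Y \<subseteq> cube N" by (auto simp: bad_def)

lemma finite_bad: "finite (bad N k Y)" using finite_subset[OF bad_sub_cube finite_cube] .

lemma bad_0: "bad N 0 {} = {}"
  unfolding bad_def by (auto dest: spec[of _ "{}"])

lemma bad_step:
  "bad N (Suc k) Y \<subseteq> insert (maj N Y) (\<Union>i<N. bad N k {y\<in>Y. y i \<noteq> maj N Y i})"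
proof
  fix x assume xb: "x \<in> bad N (Suc k) Y"
  show "x \<in> insert (maj N Y) (\<Union>i<N. bad N k {y\<in>Y. y i \<noteq> maj N Y i})"
  proof (cases "x = maj N Y")
    case False
    then obtain i where xi: "x i \<noteq> maj N Y i" by auto
    have xc: "x \<in> cube N" using xb by (auto simp: bad_def)
    have iN: "i < N"
    proof (rule ccontr)
      assume "\<not> i < N"
      thus False using xi xc by (auto simp: cube_def maj_def)
    qed
    have "x \<in> bad N k {y\<in>Y. y i \<noteq> maj N Y i}"
      unfolding bad_def
    proof (intro CollectI conjI allI impI xc)
      fix S assume S: "S \<subseteq> {..<N} \<and> card S \<le> k"
      have fS: "finite S" using S finite_subset by blast
      have "insert i S \<subseteq> {..<N} \<and> card (insert i S) \<le> Suc k"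
        using S iN card_insert_le_m1 fS by (simp add: card_insert_if)
      then obtain y where "y \<in> Y" "\<forall>j\<in>insert i S. y j = x j"
        using xb unfolding bad_def by blast
      thus "\<exists>y\<in>{y \<in> Y. y i \<noteq> maj N Y i}. \<forall>j\<in>S. y j = x j" using xi by auto
    qed
    thus ?thesis using iN by blast
  qed simp
qed

lemma bad_bound: "finite Y \<Longrightarrow> card Y < 2 ^ k \<Longrightarrow> card (bad N k Y) \<le> (N+1) ^ k"
proof (induction k arbitrary: Y)
  case 0
  hence "Y = {}" by simp
  thus ?case by (simp add: bad_0)
next
  case (Suc k)
  have IH: "\<And>i. i < N \<Longrightarrow> card (bad N k {y\<in>Y. y i \<noteq> maj N Y i}) \<le> (N+1)^k"
  proof -
    fix i assume iN: "i < N"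
    have "2 * card {y\<in>Y. y i \<noteq> maj N Y i} \<le> card Y" by (rule maj_half[OF Suc.prems(1) iN])
    hence "card {y\<in>Y. y i \<noteq> maj N Y i} < 2^k" using Suc.prems(2) by simp
    thus "card (bad N k {y\<in>Y. y i \<noteq> maj N Y i}) \<le> (N+1)^k"
      using Suc.IH[of "{y\<in>Y. y i \<noteq> maj N Y i}"] Suc.prems(1) by simp
  qed
  have "card (bad N (Suc k) Y) \<le> card (insert (maj N Y) (\<Union>i<N. bad N k {y\<in>Y. y i \<noteq> maj N Y i}))"
    by (rule card_mono[OF _ bad_step]) (simp add: finite_bad)
  also have "\<dots> \<le> Suc (card (\<Union>i<N. bad N k {y\<in>Y. y i \<noteq> maj N Y i}))"
    by (simp add: card_insert_if finite_bad)
  also have "card (\<Union>i<N. bad N k {y\<in>Y. y i \<noteq> maj N Y i}) \<le> (\<Sum>i<N. card (bad N k {y\<in>Y. y i \<noteq> maj N Y i}))"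
    by (rule card_UN_le) simp
  also have "\<dots> \<le> (\<Sum>i<N. (N+1)^k)" using IH by (intro sum_mono) auto
  also have "\<dots> = N * (N+1)^k" by simp
  finally have "card (bad N (Suc k) Y) \<le> Suc (N * (N+1)^k)" by simp
  moreover have "Suc (N * (N+1)^k) \<le> (N+1)^Suc k"
  proof -
    have "(1::nat) \<le> (N+1)^k" by simp
    thus ?thesis by simp
  qed
  ultimately show ?case by linarith
qed

lemma cert_le: "S \<subseteq> {..<N} \<Longrightarrow> \<forall>y\<in>cube N. (\<forall>i\<in>S. y i = x i) \<longrightarrow> f y = f x \<Longrightarrow> cert N f x \<le> card S"
  unfolding cert_def by (rule Least_le) blast

lemma side_bound:
  assumes N2: "N \<ge> 2" and m1: "card {y\<in>cube N. f y = b} \<ge> 1"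
    and hA: "2 powr h \<le> real (card {x\<in>cube N. h \<le> real (cert N f x)})"
  shows "h \<le> 10 * (1 + log 2 (real (card {y\<in>cube N. f y = b}))) * log 2 (real N)"
proof (rule ccontr)
  define Y where "Y = {y\<in>cube N. f y = b}"
  define m where "m = card Y"
  assume "\<not> ?thesis"
  hence hB: "h > 10 * (1 + log 2 m) * log 2 N" by (simp add: m_def Y_def)
  have m1': "m \<ge> 1" using m1 by (simp add: m_def Y_def)
  define k where "k = (LEAST k. m < 2^k)"
  have mk: "m < 2^k" unfolding k_def by (rule LeastI[of _ m]) (rule less_exp)
  have k0: "k \<noteq> 0" proof assume "k = 0" thus False using mk m1' by simp qed
  then obtain j where kj: "k = Suc j" by (cases k) auto
  have "\<not> m < 2^j" using not_less_Least[of j "\<lambda>k. m < 2^k"] kj k_def by simp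
  hence km: "2^k \<le> 2*m" using kj by simp
  have k1: "k \<ge> 1" using k0 by simp
  have "2 powr (real k) \<le> real (2*m)"
    using km by (simp add: powr_realpow) (metis of_nat_le_iff of_nat_numeral of_nat_power of_nat_mult)
  hence "real k \<le> log 2 (real (2*m))" using m1' by (subst le_log_iff) auto
  also have "\<dots> = 1 + log 2 m" using m1' by (simp add: log_mult_pos)
  finally have klog: "real k \<le> 1 + log 2 m" .
  have logN: "log 2 N \<ge> 1" using N2 by (subst one_le_log_cancel_iff) auto
  have lm0: "log 2 m \<ge> 0" using m1' by simp
  have hk: "h > real k"
  proof -
    have "real k \<le> 10 * (1 + log 2 m) * 1" using klog lm0 by simp
    also have "\<dots> \<le> 10 * (1 + log 2 m) * log 2 N" using logN lm0
      by (intro mult_left_mono) auto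
    finally show ?thesis using hB by simp
  qed
  have sub: "{x\<in>cube N. h \<le> real (cert N f x)} \<subseteq> Y \<union> bad N k Y"
  proof
    fix x assume xA: "x \<in> {x\<in>cube N. h \<le> real (cert N f x)}"
    show "x \<in> Y \<union> bad N k Y"
    proof (cases "f x = b")
      case True thus ?thesis using xA by (simp add: Y_def)
    next
      case False
      have ck: "cert N f x > k" using xA hk by simp
      have "x \<in> bad N k Y" unfolding bad_def
      proof (intro CollectI conjI allI impI)
        show "x \<in> cube N" using xA by simp
        fix S assume S: "S \<subseteq> {..<N} \<and> card S \<le> k"
        show "\<exists>y\<in>Y. \<forall>i\<in>S. y i = x i"
        proof (rule ccontr)
          assume "\<not> (\<exists>y\<in>Y. \<forall>i\<in>S. y i = x i)"
          hence "\<forall>y\<in>cube N. (\<forall>i\<in>S. y i = x i) \<longrightarrow> f y = f x"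
            using False by (auto simp: Y_def)
          hence "cert N f x \<le> card S" using S by (intro cert_le) auto
          thus False using S ck by simp
        qed
      qed
      thus ?thesis by simp
    qed
  qed
  have fY: "finite Y" unfolding Y_def using finite_cube by simp
  have "card {x\<in>cube N. h \<le> real (cert N f x)} \<le> card (Y \<union> bad N k Y)"
    by (rule card_mono[OF _ sub]) (simp add: fY finite_bad)
  also have "\<dots> \<le> m + card (bad N k Y)" unfolding m_def by (rule card_Un_le)
  also have "\<dots> \<le> m + (N+1)^k" using bad_bound[OF fY, of k N] mk by (simp add: m_def)
  finally have c1: "card {x\<in>cube N. h \<le> real (cert N f x)} \<le> m + (N+1)^k" .
  have "m + (N+1)^k \<le> N^(3*k)"
  proof -
    have "2^k \<le> (N+1)^k" using N2 by (intro power_mono) auto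
    have "2*N \<le> N*N" by (rule mult_le_mono1[OF N2])
    hence "N + 1 \<le> N^2" using N2 unfolding power2_eq_square by linarith
    hence a: "(N+1)^k \<le> (N^2)^k" by (intro power_mono) auto
    have b: "2 \<le> N^k" using N2 k1
      by (metis dual_order.trans le_less_trans less_imp_le_nat not_less one_less_numeral_iff power_increasing power_one_right semiring_norm(76))
    have "m + (N+1)^k \<le> 2 * (N+1)^k" using mk \<open>2^k \<le> (N+1)^k\<close> by simp
    also have "\<dots> \<le> N^k * (N^2)^k" using a b by (intro mult_mono) auto
    also have "\<dots> = N^(3*k)" by (simp add: power_mult[symmetric] power_add[symmetric])
    finally show ?thesis .
  qed
  with c1 have c2: "real (card {x\<in>cube N. h \<le> real (cert N f x)}) \<le> real N ^ (3*k)"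
    by (metis le_trans of_nat_le_iff of_nat_power)
  have Np: "real N > 0" using N2 by simp
  have "real N ^ (3*k) = 2 powr (log 2 N * real (3*k))"
    using Np by (simp add: powr_powr[symmetric] powr_realpow power_mult)
  also have "\<dots> \<le> 2 powr (log 2 N * (10 * (1 + log 2 m)))"
    using klog logN by (intro powr_mono mult_left_mono) auto
  also have "\<dots> < 2 powr h" using hB by (simp add: mult.commute mult.left_commute)
  finally show False using c2 hA by simp
qed

theorem theorem22:
  fixes N :: nat and f :: "(nat \<Rightarrow> bool) \<Rightarrow> bool"
  assumes "N \<ge> 2"
  shows "Hindex N (\<lambda>x. real (cert N f x)) \<le> 10 * Bal N f * log 2 (real N)"
proof -
  define A where "A = {h::real. 2 powr h \<le> real (card {x\<in>cube N. (\<lambda>x. real (cert N f x)) x \<ge> h})}"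
  have z: "(\<lambda>_. False) \<in> cube N" by (simp add: cube_def)
  have ne: "A \<noteq> {}"
  proof -
    have "{x\<in>cube N. real (cert N f x) \<ge> 0} = cube N" by auto
    moreover have "card (cube N) \<ge> 1" using z finite_cube
      by (metis One_nat_def Suc_leI card_gt_0_iff empty_iff)
    ultimately have "0 \<in> A" by (simp add: A_def)
    thus ?thesis by blast
  qed
  have "Sup A \<le> 10 * Bal N f * log 2 (real N)"
  proof (rule cSup_least[OF ne])
    fix h assume hA: "h \<in> A"
    show "h \<le> 10 * Bal N f * log 2 (real N)"
    proof (cases "\<forall>x\<in>cube N. \<forall>y\<in>cube N. f x = f y")
      case True
      have c0: "\<And>x. x \<in> cube N \<Longrightarrow> cert N f x = 0"
      proof -
        fix x assume xc: "x \<in> cube N"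
        have "\<forall>y\<in>cube N. (\<forall>i\<in>{}. y i = x i) \<longrightarrow> f y = f x"
          using True xc by blast
        hence "cert N f x \<le> card ({}::nat set)" by (rule cert_le[rotated]) simp
        thus "cert N f x = 0" by simp
      qed
      show ?thesis
      proof (rule ccontr)
        assume "\<not> ?thesis"
        moreover have "Bal N f = 0" unfolding Bal_def by (rule if_P[OF True])
        ultimately have "h > 0" by simp
        hence E: "{x\<in>cube N. real (cert N f x) \<ge> h} = {}" using c0 by auto
        have "real (card {x\<in>cube N. real (cert N f x) \<ge> h}) = 0" by (simp only: E card.empty of_nat_0)
        moreover have "2 powr h \<le> real (card {x\<in>cube N. real (cert N f x) \<ge> h})"
          using hA by (simp add: A_def)
        moreover have "2 powr h > 0" by simp
        ultimately show False by linarith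
      qed
    next
      case False
      then obtain x y where xy: "x \<in> cube N" "y \<in> cube N" "f x \<noteq> f y" by blast
      have h': "2 powr h \<le> real (card {x\<in>cube N. h \<le> real (cert N f x)})" using hA by (simp add: A_def)
      have fin: "\<And>b. finite {y\<in>cube N. f y = b}" using finite_cube by simp
      have m1: "\<And>b. card {y\<in>cube N. f y = b} \<ge> 1"
      proof -
        fix b
        have "x \<in> {y\<in>cube N. f y = b} \<or> y \<in> {y\<in>cube N. f y = b}" using xy by auto
        hence "{y\<in>cube N. f y = b} \<noteq> {}" by blast
        thus "card {y\<in>cube N. f y = b} \<ge> 1" using fin[of b]
          by (metis One_nat_def Suc_leI card_gt_0_iff)
      qed
      have b0: "h \<le> 10 * (1 + log 2 (real (card {y\<in>cube N. f y = False}))) * log 2 (real N)"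
        by (rule side_bound[OF assms m1 h'])
      have b1: "h \<le> 10 * (1 + log 2 (real (card {y\<in>cube N. f y = True}))) * log 2 (real N)"
        by (rule side_bound[OF assms m1 h'])
      have "Bal N f = min (1 + log 2 (real (card {y\<in>cube N. f y = False})))
              (1 + log 2 (real (card {y\<in>cube N. f y = True})))"
        unfolding Bal_def by (rule if_not_P[OF False])
      thus ?thesis using b0 b1 unfolding min_def by (auto split: if_splits)
    qed
  qed
  thus ?thesis by (simp add: Hindex_def A_def)
qed

end
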